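(* Let $U$ take values in a finite set $\mathcal{U}$ with $|\mathcal{U}|=L\ge2$ and let $Q$ take values in a finite alphabet. Then \[Z^{(L)}(U|Q)^2\le H^{(L)}(U|Q)\le\log_L\big(1+(L-1)Z^{(L)}(U|Q)\big),\qquad 1-Z^{(L)}(U|Q)\le K^{(L)}(U|Q)\le\sqrt{1-Z^{(L)}(U|Q)^2}.\]
   Context: With $P_Q$ and $P_{U|Q}$ the marginal and conditional laws, and sums over $u'\ne u$ ranging over ordered pairs $(u,u')\in\mathcal{U}^2$ with $u'\neq u$: $Z^{(L)}(U|Q)=\sum_q\sum_{u'\ne u}\frac{P_Q(q)}{L-1}\sqrt{P_{U|Q}(u|q)P_{U|Q}(u'|q)}$; $K^{(L)}(U|Q)=\sum_q\sum_{u'\ne u}\frac{P_Q(q)}{L-1}\cdot\frac{|P_{U|Q}(u|q)-P_{U|Q}(u'|q)|}{2}$; $H^{(L)}(U|Q)=-\sum_q\sum_uP_Q(q)P_{U|Q}(u|q)\log_LP_{U|Q}(u|q)$. *)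

theory Defs
  imports "HOL-Analysis.Analysis"
begin

text \<open>The alphabet of U is the finite set UU with L = card UU; the alphabet of Q is QQ.
  PQ is the marginal law of Q, W q u = P_{U|Q}(u|q).\<close>

definition Zcond :: "'u set \<Rightarrow> 'q set \<Rightarrow> ('q \<Rightarrow> real) \<Rightarrow> ('q \<Rightarrow> 'u \<Rightarrow> real) \<Rightarrow> real" where
  "Zcond UU QQ PQ W =
     (\<Sum>q\<in>QQ. \<Sum>(u, u')\<in>{(u, u'). u \<in> UU \<and> u' \<in> UU \<and> u' \<noteq> u}.
        PQ q / (real (card UU) - 1) * sqrt (W q u * W q u'))"

definition Kcond :: "'u set \<Rightarrow> 'q set \<Rightarrow> ('q \<Rightarrow> real) \<Rightarrow> ('q \<Rightarrow> 'u \<Rightarrow> real) \<Rightarrow> real" where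
  "Kcond UU QQ PQ W =
     (\<Sum>q\<in>QQ. \<Sum>(u, u')\<in>{(u, u'). u \<in> UU \<and> u' \<in> UU \<and> u' \<noteq> u}.
        PQ q / (real (card UU) - 1) * (\<bar>W q u - W q u'\<bar> / 2))"

text \<open>Convention 0 log 0 = 0 holds automatically since log b 0 = 0 in Isabelle.\<close>
definition Hcond :: "'u set \<Rightarrow> 'q set \<Rightarrow> ('q \<Rightarrow> real) \<Rightarrow> ('q \<Rightarrow> 'u \<Rightarrow> real) \<Rightarrow> real" where
  "Hcond UU QQ PQ W =
     - (\<Sum>q\<in>QQ. \<Sum>u\<in>UU. PQ q * W q u * log (real (card UU)) (W q u))"

end

theory Submission
  imports Defs
begin

abbreviation prs :: "'u set \<Rightarrow> ('u \<times> 'u) set" where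
  "prs A \<equiv> {(u, u'). u \<in> A \<and> u' \<in> A \<and> u' \<noteq> u}"

lemma pairs_sum:
  assumes "finite A"
  shows "(\<Sum>(u, u')\<in>prs A. f u u') = (\<Sum>u\<in>A. \<Sum>u'\<in>A - {u}. f u u')"
proof -
  have "prs A = Sigma A (\<lambda>u. A - {u})" by auto
  then show ?thesis using assms by (simp add: sum.Sigma)
qed

lemma sum_others:
  assumes "finite A" "u \<in> A"
  shows "(\<Sum>u'\<in>A - {u}. (p::'u\<Rightarrow>real) u') = sum p A - p u"
  using assms by (simp add: sum_diff1)

lemma pairs_fst:
  assumes "finite A"
  shows "(\<Sum>(u, u')\<in>prs A. (g::'u\<Rightarrow>real) u) = (real (card A) - 1) * sum g A"
proof -
  have "(\<Sum>(u, u')\<in>prs A. g u) = (\<Sum>u\<in>A. \<Sum>u'\<in>A - {u}. g u)" by (rule pairs_sum[OF assms])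
  also have "\<dots> = (\<Sum>u\<in>A. (real (card A) - 1) * g u)"
  proof (intro sum.cong refl)
    fix u assume u: "u \<in> A"
    then have "card A \<ge> 1" using assms by (metis One_nat_def Suc_leI card_gt_0_iff empty_iff)
    then show "(\<Sum>u'\<in>A - {u}. g u) = (real (card A) - 1) * g u"
      using assms u by (simp add: card_Diff_singleton of_nat_diff)
  qed
  finally show ?thesis by (simp add: sum_distrib_left)
qed

lemma pairs_snd:
  assumes "finite A"
  shows "(\<Sum>(u, u')\<in>prs A. (g::'u\<Rightarrow>real) u') = (\<Sum>u\<in>A. sum g A - g u)"
proof -
  have "(\<Sum>(u, u')\<in>prs A. g u') = (\<Sum>u\<in>A. \<Sum>u'\<in>A - {u}. g u')" by (rule pairs_sum[OF assms])
  also have "\<dots> = (\<Sum>u\<in>A. sum g A - g u)"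
    using assms by (intro sum.cong) (auto simp: sum_diff1)
  finally show ?thesis .
qed

lemma pair_le_one:
  assumes "finite A" "\<forall>u\<in>A. p u \<ge> (0::real)" "u \<in> A" "u' \<in> A" "u' \<noteq> u"
  shows "p u + p u' \<le> sum p A"
proof -
  have "sum p {u, u'} \<le> sum p A" using assms by (intro sum_mono2) auto
  then show ?thesis using assms by simp
qed

definition kap :: "real \<Rightarrow> real" where
  "kap x = (if 0 < x \<and> x < 1 then 1 / (- ln x) else 0)"

lemma int_k:
  assumes "0 \<le> x" "x \<le> 1"
  shows "((\<lambda>s. x powr s) has_integral integral {0..1} (\<lambda>s. x powr s)) {0..1}
         \<and> kap x * (1 - x) \<le> integral {0..1} (\<lambda>s. x powr s)"
proof (cases "0 < x \<and> x < 1")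
  case True
  then have lx: "ln x < 0" by simp
  have d: "\<And>s. ((\<lambda>s. x powr s / ln x) has_real_derivative x powr s) (at s)"
  proof -
    fix s
    have "((\<lambda>s. exp (s * ln x) / ln x) has_real_derivative exp (s * ln x)) (at s)"
      using lx by (auto intro!: derivative_eq_intros)
    then show "((\<lambda>s. x powr s / ln x) has_real_derivative x powr s) (at s)" using True by (simp add: powr_def)
  qed
  have "((\<lambda>s. x powr s) has_integral (x powr 1 / ln x - x powr 0 / ln x)) {0..1}"
    by (intro fundamental_theorem_of_calculus)
       (auto simp: has_real_derivative_iff_has_vector_derivative[symmetric] intro!: has_field_derivative_at_within d)
  moreover have "x powr 1 / ln x - x powr 0 / ln x = kap x * (1 - x)"
    using True lx by (simp add: kap_def field_simps)
  ultimately show ?thesis by (simp add: integral_unique)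
next
  case False
  then have "x = 0 \<or> x = 1" using assms by auto
  then show ?thesis
  proof
    assume "x = 0" then show ?thesis by (simp add: kap_def)
  next
    assume "x = 1"
    moreover have "((\<lambda>s::real. 1::real) has_integral 1) {0..1}"
      using has_integral_const_real[of "1::real" 0 1] by simp
    ultimately show ?thesis by (simp add: kap_def)
  qed
qed

lemma int_L:
  assumes "(L::real) > 1"
  shows "((\<lambda>s. L powr (1 - s)) has_integral ((L - 1) / ln L)) {0..1}"
proof -
  have lx: "ln L > 0" using assms by simp
  have d: "\<And>s. ((\<lambda>s. - (L powr (1 - s) / ln L)) has_real_derivative L powr (1 - s)) (at s)"
  proof -
    fix s
    have "((\<lambda>s. - (exp ((1 - s) * ln L) / ln L)) has_real_derivative exp ((1 - s) * ln L)) (at s)"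
      using lx by (auto intro!: derivative_eq_intros)
    then show "((\<lambda>s. - (L powr (1 - s) / ln L)) has_real_derivative L powr (1 - s)) (at s)" using assms by (simp add: powr_def)
  qed
  have "((\<lambda>s. L powr (1 - s)) has_integral (- (L powr (1 - 1) / ln L) - - (L powr (1 - 0) / ln L))) {0..1}"
    by (intro fundamental_theorem_of_calculus)
       (auto simp: has_real_derivative_iff_has_vector_derivative[symmetric] intro!: has_field_derivative_at_within d)
  moreover have "- (L powr (1 - 1) / ln L) - - (L powr (1 - 0) / ln L) = (L - 1) / ln L"
    using assms by (simp add: field_simps)
  ultimately show ?thesis by simp
qed

lemma powr_sum_le:
  assumes "finite A" "card A = L" "L \<ge> 1" "\<forall>u\<in>A. p u \<ge> 0" "sum p A = (1::real)" "0 \<le> s" "s \<le> 1"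
  shows "(\<Sum>u\<in>A. p u powr s) \<le> real L powr (1 - s)"
proof -
  have Lp: "real L > 0" using assms by simp
  have "\<forall>u\<in>A. p u powr s \<le> (s * real L * p u + (1 - s)) / real L powr s"
  proof
    fix u assume u: "u \<in> A"
    show "p u powr s \<le> (s * real L * p u + (1 - s)) / real L powr s"
    proof (cases "p u = 0")
      case True then show ?thesis using assms by simp
    next
      case False
      then have pp: "p u > 0" using u assms by force
      have "(real L * p u) powr s * 1 powr (1 - s) \<le> s * (real L * p u) + (1 - s) * 1"
        using assms pp Lp by (intro Youngs_inequality_0) auto
      then have "real L powr s * p u powr s \<le> s * real L * p u + (1 - s)"
        using pp Lp by (simp add: powr_mult)
      then show ?thesis using Lp by (simp add: field_simps mult.commute)
    qed
  qed
  then have "(\<Sum>u\<in>A. p u powr s) \<le> (\<Sum>u\<in>A. (s * real L * p u + (1 - s)) / real L powr s)"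
    by (intro sum_mono) auto
  also have "\<dots> = (s * real L * sum p A + real L * (1 - s)) / real L powr s"
  proof -
    have "(\<Sum>u\<in>A. s * real L * p u) = s * real L * sum p A" by (simp add: sum_distrib_left)
    then show ?thesis using assms by (simp add: sum_divide_distrib[symmetric] sum.distrib)
  qed
  also have "\<dots> = real L / real L powr s" using assms by (simp add: algebra_simps)
  also have "\<dots> = real L powr (1 - s)" using Lp by (simp add: powr_diff)
  finally show ?thesis .
qed


locale distr =
  fixes A :: "'u set" and p :: "'u \<Rightarrow> real"
  assumes fin: "finite A" and card2: "card A \<ge> 2"
    and nn: "\<forall>u\<in>A. p u \<ge> 0" and s1: "sum p A = 1"
begin

definition "Y = (\<Sum>(u, u')\<in>prs A. sqrt (p u * p u'))"
definition "X = (\<Sum>(u, u')\<in>prs A. \<bar>p u - p u'\<bar> / 2)"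
definition "Hn = - (\<Sum>u\<in>A. p u * ln (p u))"

lemma Lge: "real (card A) \<ge> 2" using card2 by simp

lemma half_sum: "(\<Sum>(u, u')\<in>prs A. (p u + p u') / 2) = real (card A) - 1"
proof -
  have "(\<Sum>(u, u')\<in>prs A. (p u + p u') / 2)
      = ((\<Sum>(u, u')\<in>prs A. p u) + (\<Sum>(u, u')\<in>prs A. p u')) / 2"
  proof -
    have "(\<Sum>x\<in>prs A. (case x of (u, u') \<Rightarrow> (p u + p u') / 2))
       = (\<Sum>x\<in>prs A. (case x of (u, u') \<Rightarrow> p u) / 2 + (case x of (u, u') \<Rightarrow> p u') / 2)"
      by (intro sum.cong) auto
    then show ?thesis by (simp add: sum.distrib sum_divide_distrib[symmetric])
  qed
  also have "\<dots> = ((real (card A) - 1) * 1 + (\<Sum>u\<in>A. 1 - p u)) / 2"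
    using pairs_fst[OF fin, of p] pairs_snd[OF fin, of p] s1 by simp
  also have "(\<Sum>u\<in>A. 1 - p u) = real (card A) - 1"
    using s1 by (simp add: sum_subtractf)
  finally show ?thesis by simp
qed

lemma Y_nn: "Y \<ge> 0"
  unfolding Y_def using nn by (auto intro!: sum_nonneg)

lemma KZ1: "X + Y \<ge> real (card A) - 1"
proof -
  have "real (card A) - 1 = (\<Sum>(u, u')\<in>prs A. (p u + p u') / 2)" using half_sum by simp
  also have "\<dots> \<le> (\<Sum>(u, u')\<in>prs A. \<bar>p u - p u'\<bar> / 2 + sqrt (p u * p u'))"
  proof (intro sum_mono)
    fix x assume x: "x \<in> prs A"
    obtain u u' where xe: "x = (u, u')" by force
    have a: "p u \<ge> 0" "p u' \<ge> 0" using x xe nn by auto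
    have "(p u + p u') / 2 \<le> \<bar>p u - p u'\<bar> / 2 + sqrt (p u * p u')"
    proof (cases "p u \<le> p u'")
      case True
      have "p u \<le> sqrt (p u * p u')"
        using real_sqrt_le_mono[of "p u * p u" "p u * p u'"] True a by (simp add: mult_left_mono)
      moreover have "\<bar>p u - p u'\<bar> = p u' - p u" using True by simp
      ultimately show ?thesis by (simp add: field_simps)
    next
      case False
      have "p u' \<le> sqrt (p u * p u')"
        using real_sqrt_le_mono[of "p u' * p u'" "p u * p u'"] False a by (simp add: mult_right_mono)
      moreover have "\<bar>p u - p u'\<bar> = p u - p u'" using False by simp
      ultimately show ?thesis by (simp add: field_simps)
    qed
    then show "(case x of (u, u') \<Rightarrow> (p u + p u') / 2) \<le> (case x of (u, u') \<Rightarrow> \<bar>p u - p u'\<bar> / 2 + sqrt (p u * p u'))"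
      using xe by simp
  qed
  also have "\<dots> = X + Y" unfolding X_def Y_def by (simp add: sum.distrib split_def)
  finally show ?thesis .
qed

lemma KZ2: "X\<^sup>2 + Y\<^sup>2 \<le> (real (card A) - 1)\<^sup>2"
proof -
  define z where "z = (\<lambda>(u, u'). Complex (\<bar>p u - p u'\<bar> / 2) (sqrt (p u * p u')))"
  have "sum z (prs A) = Complex X Y"
    unfolding X_def Y_def z_def by (simp add: complex_eq_iff Re_sum Im_sum split_def)
  then have "sqrt (X\<^sup>2 + Y\<^sup>2) = norm (sum z (prs A))" by (simp add: complex_norm)
  also have "\<dots> \<le> (\<Sum>x\<in>prs A. norm (z x))" by (rule norm_sum)
  also have "\<dots> = (\<Sum>(u, u')\<in>prs A. (p u + p u') / 2)"
  proof (intro sum.cong refl)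
    fix x assume x: "x \<in> prs A"
    obtain u u' where xe: "x = (u, u')" by force
    have a: "p u \<ge> 0" "p u' \<ge> 0" using x xe nn by auto
    have "(\<bar>p u - p u'\<bar> / 2)\<^sup>2 + (sqrt (p u * p u'))\<^sup>2 = ((p u + p u') / 2)\<^sup>2"
      using a by (simp add: power_divide) (simp add: power2_eq_square field_simps)
    then have "sqrt ((\<bar>p u - p u'\<bar> / 2)\<^sup>2 + (sqrt (p u * p u'))\<^sup>2) = (p u + p u') / 2"
      using a by simp
    then show "norm (z x) = (case x of (u, u') \<Rightarrow> (p u + p u') / 2)"
      using xe by (simp add: z_def complex_norm)
  qed
  also have "\<dots> = real (card A) - 1" by (rule half_sum)
  finally have h: "sqrt (X\<^sup>2 + Y\<^sup>2) \<le> real (card A) - 1" .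
  have "X\<^sup>2 + Y\<^sup>2 = (sqrt (X\<^sup>2 + Y\<^sup>2))\<^sup>2" by simp
  also have "\<dots> \<le> (real (card A) - 1)\<^sup>2" using h by (intro power_mono) auto
  finally show ?thesis .
qed

lemma S2: "(\<Sum>u\<in>A. sqrt (p u))\<^sup>2 = 1 + Y"
proof -
  have "(\<Sum>u\<in>A. sqrt (p u))\<^sup>2 = (\<Sum>u\<in>A. \<Sum>u'\<in>A. sqrt (p u) * sqrt (p u'))"
    by (simp add: power2_eq_square sum_product)
  also have "\<dots> = (\<Sum>u\<in>A. p u + (\<Sum>u'\<in>A - {u}. sqrt (p u * p u')))"
  proof (intro sum.cong refl)
    fix u assume u: "u \<in> A"
    have "(\<Sum>u'\<in>A. sqrt (p u) * sqrt (p u')) = sqrt (p u) * sqrt (p u) + (\<Sum>u'\<in>A - {u}. sqrt (p u) * sqrt (p u'))"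
      using u fin by (simp add: sum.remove)
    then show "(\<Sum>u'\<in>A. sqrt (p u) * sqrt (p u')) = p u + (\<Sum>u'\<in>A - {u}. sqrt (p u * p u'))"
      using u nn by (simp add: real_sqrt_mult)
  qed
  also have "\<dots> = 1 + Y" using s1 unfolding Y_def by (simp add: sum.distrib pairs_sum[OF fin])
  finally show ?thesis .
qed

lemma p_le1: "u \<in> A \<Longrightarrow> p u \<le> 1"
  using member_le_sum[of u A p] nn fin s1 by auto

lemma Hup: "Hn \<le> ln (1 + Y)"
proof -
  define S where "S = (\<Sum>u\<in>A. sqrt (p u))"
  have S2': "S\<^sup>2 = 1 + Y" using S2 by (simp add: S_def)
  have S0: "S \<ge> 0" unfolding S_def using nn by (auto intro!: sum_nonneg)
  have "1 \<le> S\<^sup>2" using Y_nn S2' by simp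
  then have "sqrt 1 \<le> sqrt (S\<^sup>2)" by (rule real_sqrt_le_mono)
  then have S1: "S \<ge> 1" using S0 by simp
  have "\<forall>u\<in>A. - (p u * ln (p u)) \<le> 2 * ln S * p u + 2 * (sqrt (p u) / S - p u)"
  proof
    fix u assume u: "u \<in> A"
    show "- (p u * ln (p u)) \<le> 2 * ln S * p u + 2 * (sqrt (p u) / S - p u)"
    proof (cases "p u = 0")
      case True then show ?thesis by simp
    next
      case False
      then have pp: "p u > 0" using nn u by force
      define t where "t = 1 / (sqrt (p u) * S)"
      have tp: "t > 0" using pp S1 by (simp add: t_def)
      have "ln t \<le> t - 1" by (rule ln_le_minus_one[OF tp])
      moreover have "ln t = - (ln (p u) / 2) - ln S"
        using pp S1 by (simp add: t_def ln_div ln_mult ln_sqrt)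
      ultimately have "- (ln (p u) / 2) - ln S \<le> t - 1" by simp
      then have "2 * p u * (- (ln (p u) / 2) - ln S) \<le> 2 * p u * (t - 1)"
        using pp by (intro mult_left_mono) auto
      moreover have "p u * t = sqrt (p u) / S"
        using pp S1 by (simp add: t_def field_simps)
      moreover have "2 * p u * (t - 1) = 2 * (p u * t) - 2 * p u" by (simp add: algebra_simps)
      moreover have "2 * p u * (- (ln (p u) / 2) - ln S) = - (p u * ln (p u)) - 2 * ln S * p u"
        by (simp add: algebra_simps)
      ultimately show ?thesis by (smt (verit))
    qed
  qed
  then have "Hn \<le> (\<Sum>u\<in>A. 2 * ln S * p u + 2 * (sqrt (p u) / S - p u))"
    unfolding Hn_def by (simp add: sum_negf[symmetric]) (intro sum_mono, auto)
  also have "\<dots> = 2 * ln S * sum p A + 2 * ((\<Sum>u\<in>A. sqrt (p u) / S) - sum p A)"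
    by (simp add: sum.distrib sum_subtractf sum_distrib_left)
  also have "(\<Sum>u\<in>A. sqrt (p u) / S) = 1"
    using S1 by (simp add: sum_divide_distrib[symmetric] S_def[symmetric])
  also have "2 * ln S * sum p A + 2 * (1 - sum p A) = 2 * ln S" using s1 by simp
  also have "\<dots> = ln (S\<^sup>2)" using S1 by (simp add: ln_realpow)
  finally show ?thesis using S2' by simp
qed

lemma kap_nn: "kap x \<ge> 0"
  by (simp add: kap_def)

lemma kap_sum: "(\<Sum>u\<in>A. kap (p u) * (1 - p u)) \<le> (real (card A) - 1) / ln (real (card A))"
proof -
  define I where "I u = integral {0..1} (\<lambda>s. p u powr s)" for u
  have hI: "\<And>u. u \<in> A \<Longrightarrow> ((\<lambda>s. p u powr s) has_integral I u) {0..1} \<and> kap (p u) * (1 - p u) \<le> I u"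
    unfolding I_def using nn p_le1 by (intro int_k) auto
  have "((\<lambda>s. \<Sum>u\<in>A. p u powr s) has_integral sum I A) {0..1}"
    using hI fin by (intro has_integral_sum) auto
  moreover have "((\<lambda>s. real (card A) powr (1 - s)) has_integral ((real (card A) - 1) / ln (real (card A)))) {0..1}"
    using Lge by (intro int_L) auto
  ultimately have "sum I A \<le> (real (card A) - 1) / ln (real (card A))"
    by (rule has_integral_le) (use powr_sum_le[OF fin refl _ nn s1] card2 in auto)
  moreover have "(\<Sum>u\<in>A. kap (p u) * (1 - p u)) \<le> sum I A"
    using hI by (intro sum_mono) auto
  ultimately show ?thesis by simp
qed

lemma Hlow: "Y\<^sup>2 \<le> (real (card A) - 1)\<^sup>2 * Hn / ln (real (card A))"
proof -
  define a where "a = (\<lambda>(u, u'). sqrt (p u' * kap (p u)))"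
  define b where "b = (\<lambda>(u::'u, u'::'u). sqrt (p u * - ln (p u)))"
  have "Y = (\<Sum>x\<in>prs A. a x * b x)"
    unfolding Y_def
  proof (intro sum.cong refl)
    fix x assume x: "x \<in> prs A"
    obtain u u' where xe: "x = (u, u')" by force
    have uu: "u \<in> A" "u' \<in> A" "u' \<noteq> u" using x xe by auto
    have pos: "p u \<ge> 0" "p u' \<ge> 0" using nn uu by auto
    have "sqrt (p u * p u') = sqrt (p u' * kap (p u)) * sqrt (p u * - ln (p u))"
    proof (cases "0 < p u \<and> p u < 1")
      case True
      then have "kap (p u) * (- ln (p u)) = 1" by (simp add: kap_def)
      then have "p u' * kap (p u) * (p u * - ln (p u)) = p u * p u'"
        by (metis mult.commute mult.left_commute mult_1_right)
      then show ?thesis by (simp add: real_sqrt_mult[symmetric])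
    next
      case False
      then have "p u = 0 \<or> p u \<ge> 1" using pos by auto
      then show ?thesis
      proof
        assume "p u = 0" then show ?thesis by simp
      next
        assume "p u \<ge> 1"
        moreover have "p u + p u' \<le> 1" using pair_le_one[OF fin nn uu] s1 by simp
        ultimately have "p u' = 0" using pos by simp
        then show ?thesis by simp
      qed
    qed
    then show "(case x of (u, u') \<Rightarrow> sqrt (p u * p u')) = a x * b x"
      using xe by (simp add: a_def b_def)
  qed
  then have "Y\<^sup>2 \<le> (\<Sum>x\<in>prs A. (a x)\<^sup>2) * (\<Sum>x\<in>prs A. (b x)\<^sup>2)"
    by (simp add: Cauchy_Schwarz_ineq_sum)
  also have "(\<Sum>x\<in>prs A. (a x)\<^sup>2) = (\<Sum>(u, u')\<in>prs A. p u' * kap (p u))"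
    using nn kap_nn by (intro sum.cong) (auto simp: a_def)
  also have "\<dots> = (\<Sum>u\<in>A. kap (p u) * (1 - p u))"
    unfolding pairs_sum[OF fin]
  proof (intro sum.cong refl)
    fix u assume u: "u \<in> A"
    have "(\<Sum>u'\<in>A - {u}. p u' * kap (p u)) = (\<Sum>u'\<in>A - {u}. p u') * kap (p u)"
      by (simp add: sum_distrib_right)
    then show "(\<Sum>u'\<in>A - {u}. p u' * kap (p u)) = kap (p u) * (1 - p u)"
      using sum_others[OF fin u, of p] s1 by simp
  qed
  also have "(\<Sum>x\<in>prs A. (b x)\<^sup>2) = (\<Sum>(u, u')\<in>prs A. p u * - ln (p u))"
  proof (intro sum.cong refl)
    fix x assume x: "x \<in> prs A"
    obtain u u' where xe: "x = (u, u')" by force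
    have u: "u \<in> A" using x xe by auto
    have "p u * - ln (p u) \<ge> 0"
    proof (cases "p u = 0")
      case False
      then have "p u > 0" using nn u by force
      then have "ln (p u) \<le> 0" using p_le1[OF u] by simp
      then show ?thesis using nn u by (simp add: mult_nonneg_nonpos)
    qed simp
    then show "(b x)\<^sup>2 = (case x of (u, u') \<Rightarrow> p u * - ln (p u))"
      using xe by (simp add: b_def)
  qed
  also have "\<dots> = (real (card A) - 1) * Hn"
    using pairs_fst[OF fin, of "\<lambda>u. p u * - ln (p u)"] by (simp add: Hn_def sum_negf)
  finally have h: "Y\<^sup>2 \<le> (\<Sum>u\<in>A. kap (p u) * (1 - p u)) * ((real (card A) - 1) * Hn)" .
  have Hn0: "Hn \<ge> 0"
    unfolding Hn_def
  proof -
    have "(\<Sum>u\<in>A. p u * ln (p u)) \<le> 0"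
    proof (intro sum_nonpos)
      fix u assume u: "u \<in> A"
      show "p u * ln (p u) \<le> 0"
      proof (cases "p u = 0")
        case False
        then have "p u > 0" using nn u by force
        then have "ln (p u) \<le> 0" using p_le1[OF u] by simp
        then show ?thesis using nn u by (simp add: mult_nonneg_nonpos)
      qed simp
    qed
    then show "0 \<le> - (\<Sum>u\<in>A. p u * ln (p u))" by simp
  qed
  have "Y\<^sup>2 \<le> (real (card A) - 1) / ln (real (card A)) * ((real (card A) - 1) * Hn)"
    using h kap_sum Hn0 Lge by (meson order_trans mult_right_mono mult_nonneg_nonneg diff_ge_0_iff_ge
        order_trans[OF _ Lge] one_le_numeral le_diff_eq)
  then show ?thesis by (simp add: power2_eq_square mult.assoc)
qed

end


lemma per_dist:
  assumes "finite A" "card A \<ge> 2" "\<forall>u\<in>A. p u \<ge> 0" "sum p A = (1::real)"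
  shows "(\<Sum>(u, u')\<in>prs A. \<bar>p u - p u'\<bar> / 2) + (\<Sum>(u, u')\<in>prs A. sqrt (p u * p u')) \<ge> real (card A) - 1
    \<and> (\<Sum>(u, u')\<in>prs A. \<bar>p u - p u'\<bar> / 2)\<^sup>2 + (\<Sum>(u, u')\<in>prs A. sqrt (p u * p u'))\<^sup>2 \<le> (real (card A) - 1)\<^sup>2
    \<and> - (\<Sum>u\<in>A. p u * ln (p u)) \<le> ln (1 + (\<Sum>(u, u')\<in>prs A. sqrt (p u * p u')))
    \<and> (\<Sum>(u, u')\<in>prs A. sqrt (p u * p u'))\<^sup>2 \<le> (real (card A) - 1)\<^sup>2 * (- (\<Sum>u\<in>A. p u * ln (p u))) / ln (real (card A))
    \<and> (\<Sum>(u, u')\<in>prs A. sqrt (p u * p u')) \<ge> 0"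
proof -
  interpret distr A p using assms by unfold_locales auto
  show ?thesis using KZ1 KZ2 Hup Hlow Y_nn unfolding X_def Y_def Hn_def by auto
qed

lemma jensen_sq:
  assumes "finite Q" "\<forall>q\<in>Q. a q \<ge> 0" "sum a Q = (1::real)"
  shows "(\<Sum>q\<in>Q. a q * f q)\<^sup>2 \<le> (\<Sum>q\<in>Q. a q * (f q)\<^sup>2)"
proof -
  have "(\<Sum>q\<in>Q. a q * f q) = (\<Sum>q\<in>Q. sqrt (a q) * (sqrt (a q) * f q))"
    using assms by (intro sum.cong refl) (simp add: mult.assoc[symmetric])
  then have "(\<Sum>q\<in>Q. a q * f q)\<^sup>2 \<le> (\<Sum>q\<in>Q. (sqrt (a q))\<^sup>2) * (\<Sum>q\<in>Q. (sqrt (a q) * f q)\<^sup>2)"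
    by (simp add: Cauchy_Schwarz_ineq_sum)
  also have "(\<Sum>q\<in>Q. (sqrt (a q))\<^sup>2) = 1" using assms by simp
  also have "(\<Sum>q\<in>Q. (sqrt (a q) * f q)\<^sup>2) = (\<Sum>q\<in>Q. a q * (f q)\<^sup>2)"
    using assms by (intro sum.cong refl) (simp add: power_mult_distrib)
  finally show ?thesis by simp
qed

lemma jensen_ln:
  assumes "finite Q" "\<forall>q\<in>Q. a q \<ge> 0" "sum a Q = (1::real)" "\<forall>q\<in>Q. x q \<ge> 1"
  shows "(\<Sum>q\<in>Q. a q * ln (x q)) \<le> ln (\<Sum>q\<in>Q. a q * x q)"
proof -
  define M where "M = (\<Sum>q\<in>Q. a q * x q)"
  have "M \<ge> (\<Sum>q\<in>Q. a q * 1)" unfolding M_def using assms by (intro sum_mono mult_left_mono) auto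
  then have M1: "M \<ge> 1" using assms by simp
  have "\<forall>q\<in>Q. a q * ln (x q) \<le> a q * ln M + a q * (x q / M - 1)"
  proof
    fix q assume q: "q \<in> Q"
    have xp: "x q > 0" using assms q by force
    have "ln (x q / M) \<le> x q / M - 1" using xp M1 by (intro ln_le_minus_one) auto
    then have "ln (x q) - ln M \<le> x q / M - 1" using xp M1 by (simp add: ln_div)
    then have "a q * (ln (x q) - ln M) \<le> a q * (x q / M - 1)" using assms q by (intro mult_left_mono) auto
    then show "a q * ln (x q) \<le> a q * ln M + a q * (x q / M - 1)" by (simp add: algebra_simps)
  qed
  then have "(\<Sum>q\<in>Q. a q * ln (x q)) \<le> (\<Sum>q\<in>Q. a q * ln M + a q * (x q / M - 1))"
    by (intro sum_mono) auto
  also have "\<dots> = ln M * sum a Q + ((\<Sum>q\<in>Q. a q * x q) / M - sum a Q)"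
    by (simp add: sum.distrib sum_subtractf sum_distrib_left sum_divide_distrib algebra_simps)
  also have "\<dots> = ln M" using assms M1 by (simp add: M_def)
  finally show ?thesis by (simp add: M_def)
qed

theorem lemma9:
  fixes UU :: "'u set" and QQ :: "'q set"
    and PQ :: "'q \<Rightarrow> real" and W :: "'q \<Rightarrow> 'u \<Rightarrow> real" and L :: nat
  assumes "finite UU" and "card UU = L" and "L \<ge> 2"
    and "finite QQ"
    and "\<forall>q\<in>QQ. PQ q \<ge> 0" and "(\<Sum>q\<in>QQ. PQ q) = 1"
    and "\<forall>q\<in>QQ. \<forall>u\<in>UU. W q u \<ge> 0"
    and "\<forall>q\<in>QQ. (\<Sum>u\<in>UU. W q u) = 1"
  shows "(Zcond UU QQ PQ W)\<^sup>2 \<le> Hcond UU QQ PQ W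
       \<and> Hcond UU QQ PQ W \<le> log (real L) (1 + (real L - 1) * Zcond UU QQ PQ W)
       \<and> 1 - Zcond UU QQ PQ W \<le> Kcond UU QQ PQ W
       \<and> Kcond UU QQ PQ W \<le> sqrt (1 - (Zcond UU QQ PQ W)\<^sup>2)"
proof -
  note fin = assms(1) and cU = assms(2) and L2 = assms(3) and finQ = assms(4)
    and Pn = assms(5) and P1 = assms(6) and Wn = assms(7) and W1 = assms(8)
  define y where "y q = (\<Sum>(u, u')\<in>prs UU. sqrt (W q u * W q u'))" for q
  define x where "x q = (\<Sum>(u, u')\<in>prs UU. \<bar>W q u - W q u'\<bar> / 2)" for q
  define hn where "hn q = - (\<Sum>u\<in>UU. W q u * ln (W q u))" for q
  define c where "c = real L - 1"
  have c1: "c \<ge> 1" using L2 by (simp add: c_def)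
  have lnL: "ln (real L) > 0" using L2 by simp
  have pd: "\<And>q. q \<in> QQ \<Longrightarrow> x q + y q \<ge> c \<and> (x q)\<^sup>2 + (y q)\<^sup>2 \<le> c\<^sup>2 \<and> hn q \<le> ln (1 + y q)
     \<and> (y q)\<^sup>2 \<le> c\<^sup>2 * hn q / ln (real L) \<and> y q \<ge> 0"
  proof -
    fix q assume q: "q \<in> QQ"
    show "x q + y q \<ge> c \<and> (x q)\<^sup>2 + (y q)\<^sup>2 \<le> c\<^sup>2 \<and> hn q \<le> ln (1 + y q)
     \<and> (y q)\<^sup>2 \<le> c\<^sup>2 * hn q / ln (real L) \<and> y q \<ge> 0"
      using per_dist[OF fin, of "W q"] cU L2 Wn W1 q unfolding x_def y_def hn_def c_def by auto
  qed
  define z where "z q = y q / c" for q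
  define k where "k q = x q / c" for q
  define h where "h q = hn q / ln (real L)" for q
  have Zeq: "Zcond UU QQ PQ W = (\<Sum>q\<in>QQ. PQ q * z q)"
    unfolding Zcond_def z_def y_def c_def using cU
    by (intro sum.cong refl) (simp add: sum_distrib_left sum_divide_distrib split_def)
  have Keq: "Kcond UU QQ PQ W = (\<Sum>q\<in>QQ. PQ q * k q)"
    unfolding Kcond_def k_def x_def c_def using cU
    by (intro sum.cong refl) (simp add: sum_distrib_left sum_divide_distrib split_def mult.commute)
  have Heq: "Hcond UU QQ PQ W = (\<Sum>q\<in>QQ. PQ q * h q)"
    unfolding Hcond_def h_def hn_def using cU
    by (simp add: sum_negf[symmetric] sum_distrib_left sum_divide_distrib log_def mult.assoc)
  have zh: "\<And>q. q \<in> QQ \<Longrightarrow> (z q)\<^sup>2 \<le> h q"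
  proof -
    fix q assume q: "q \<in> QQ"
    have "(y q)\<^sup>2 \<le> c\<^sup>2 * hn q / ln (real L)" using pd[OF q] by simp
    then have "(y q)\<^sup>2 / c\<^sup>2 \<le> hn q / ln (real L)" using c1 by (simp add: field_simps)
    then show "(z q)\<^sup>2 \<le> h q" by (simp add: z_def h_def power_divide)
  qed
  have kz: "\<And>q. q \<in> QQ \<Longrightarrow> (k q)\<^sup>2 + (z q)\<^sup>2 \<le> 1"
  proof -
    fix q assume q: "q \<in> QQ"
    have "(x q)\<^sup>2 + (y q)\<^sup>2 \<le> c\<^sup>2" using pd[OF q] by simp
    then have "((x q)\<^sup>2 + (y q)\<^sup>2) / c\<^sup>2 \<le> 1" using c1 by simp
    then show "(k q)\<^sup>2 + (z q)\<^sup>2 \<le> 1" by (simp add: k_def z_def power_divide add_divide_distrib)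
  qed
  have kz1: "\<And>q. q \<in> QQ \<Longrightarrow> k q + z q \<ge> 1"
  proof -
    fix q assume q: "q \<in> QQ"
    have "x q + y q \<ge> c" using pd[OF q] by simp
    then have "(x q + y q) / c \<ge> 1" using c1 by simp
    then show "k q + z q \<ge> 1" by (simp add: k_def z_def add_divide_distrib)
  qed
  have hup: "\<And>q. q \<in> QQ \<Longrightarrow> h q \<le> ln (1 + c * z q) / ln (real L)"
  proof -
    fix q assume q: "q \<in> QQ"
    have "hn q \<le> ln (1 + y q)" using pd[OF q] by simp
    moreover have "c * z q = y q" using c1 by (simp add: z_def)
    ultimately show "h q \<le> ln (1 + c * z q) / ln (real L)"
      using lnL by (simp add: h_def divide_right_mono)
  qed
  have z0: "\<And>q. q \<in> QQ \<Longrightarrow> z q \<ge> 0" using pd c1 by (simp add: z_def)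
  define Z where "Z = (\<Sum>q\<in>QQ. PQ q * z q)"
  define K where "K = (\<Sum>q\<in>QQ. PQ q * k q)"
  define H where "H = (\<Sum>q\<in>QQ. PQ q * h q)"
  have J1: "Z\<^sup>2 \<le> (\<Sum>q\<in>QQ. PQ q * (z q)\<^sup>2)" unfolding Z_def by (rule jensen_sq[OF finQ Pn P1])
  have J2: "K\<^sup>2 \<le> (\<Sum>q\<in>QQ. PQ q * (k q)\<^sup>2)" unfolding K_def by (rule jensen_sq[OF finQ Pn P1])
  have G1: "Z\<^sup>2 \<le> H"
  proof -
    have "(\<Sum>q\<in>QQ. PQ q * (z q)\<^sup>2) \<le> H" unfolding H_def
      using zh Pn by (intro sum_mono mult_left_mono) auto
    then show ?thesis using J1 by simp
  qed
  have G2: "H \<le> log (real L) (1 + c * Z)"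
  proof -
    have "H \<le> (\<Sum>q\<in>QQ. PQ q * (ln (1 + c * z q) / ln (real L)))" unfolding H_def
      using hup Pn by (intro sum_mono mult_left_mono) auto
    also have "\<dots> = (\<Sum>q\<in>QQ. PQ q * ln (1 + c * z q)) / ln (real L)"
      by (simp add: sum_divide_distrib)
    also have "(\<Sum>q\<in>QQ. PQ q * ln (1 + c * z q)) \<le> ln (\<Sum>q\<in>QQ. PQ q * (1 + c * z q))"
      using z0 c1 by (intro jensen_ln[OF finQ Pn P1]) auto
    also have "(\<Sum>q\<in>QQ. PQ q * (1 + c * z q)) = 1 + c * Z"
      using P1 by (simp add: Z_def algebra_simps sum.distrib sum_distrib_left)
    finally show ?thesis using lnL by (simp add: log_def divide_right_mono)
  qed
  have G3: "1 - Z \<le> K"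
  proof -
    have "(\<Sum>q\<in>QQ. PQ q * 1) \<le> (\<Sum>q\<in>QQ. PQ q * (k q + z q))"
      using kz1 Pn by (intro sum_mono mult_left_mono) auto
    then show ?thesis using P1 by (simp add: K_def Z_def algebra_simps sum.distrib)
  qed
  have G4: "K \<le> sqrt (1 - Z\<^sup>2)"
  proof -
    have "(\<Sum>q\<in>QQ. PQ q * (k q)\<^sup>2) \<le> (\<Sum>q\<in>QQ. PQ q * (1 - (z q)\<^sup>2))"
      using kz Pn by (intro sum_mono mult_left_mono) (auto simp: algebra_simps)
    also have "\<dots> = 1 - (\<Sum>q\<in>QQ. PQ q * (z q)\<^sup>2)"
      using P1 by (simp add: algebra_simps sum_subtractf)
    finally have "K\<^sup>2 \<le> 1 - Z\<^sup>2" using J1 J2 by simp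
    then have "sqrt (K\<^sup>2) \<le> sqrt (1 - Z\<^sup>2)" by (rule real_sqrt_le_mono)
    then show ?thesis by simp
  qed
  show ?thesis using G1 G2 G3 G4 Zeq Keq Heq
    unfolding Z_def[symmetric] K_def[symmetric] H_def[symmetric] c_def by simp
qed

end
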